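(* For every integer $t\ge 2$, $$\lim_{n\to\infty}\frac{l\bigl(2^{t-1}n+2^{t-2}\bigr)}{l\bigl(2^{t-1}n+2^{t-2}-1\bigr)}=\frac{3F(t-1)}{F(t-1)-2}.$$
   Context: For $n\ge 0$, $c(n)=\sum_{i=0}^{n}\left(\binom{n}{i}\bmod 2\right)2^{i}$, the integer whose binary digits form the $n$-th row of Pascal's triangle modulo $2$; one has $c(2n)\equiv 1\pmod 4$, and $l(n)=\frac{c(2n)-1}{4}$. $F(j)=2^{2^j}+1$ is the $j$-th Fermat number. *)

theory Defs
  imports Complex_Main
begin

definition c :: "nat \<Rightarrow> nat" where
  "c n = (\<Sum>i=0..n. ((n choose i) mod 2) * 2 ^ i)"

text \<open>Since c(2n) is congruent to 1 mod 4, the nat division below is exact.\<close>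
definition l :: "nat \<Rightarrow> nat" where
  "l n = (c (2 * n) - 1) div 4"

definition F :: "nat \<Rightarrow> nat" where
  "F j = 2 ^ (2 ^ j) + 1"

end

theory Submission
  imports Defs
begin

definition cb :: "nat \<Rightarrow> nat \<Rightarrow> nat" where
  "cb b n = (\<Sum>i<Suc n. ((n choose i) mod 2) * b ^ i)"

lemma par_even: "(even (2*n choose (2*i)) = even (n choose i)) \<and> even (2*n choose (2*i+1))"
proof (induction n arbitrary: i)
  case 0 then show ?case by (cases i) auto
next
  case (Suc n)
  show ?case
  proof (cases i)
    case 0 then show ?thesis by simp
  next
    case (Suc j)
    have e1: "2 * Suc n choose (2*i) = (2*n choose (2*j)) + 2*(2*n choose (2*j+1)) + (2*n choose (2*Suc j))"
      using Suc by (simp add: numeral_2_eq_2)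
    have e2: "2 * Suc n choose (2*i+1) = (2*n choose (2*j+1)) + 2*(2*n choose (2*Suc j)) + (2*n choose (2*Suc j+1))"
      using Suc by (simp add: numeral_2_eq_2)
    have i1: "even (2*n choose (2*j)) = even (n choose j)" "even (2*n choose (2*j+1))"
      using Suc.IH[of j] by auto
    have i2: "even (2*n choose (2*Suc j)) = even (n choose Suc j)" "even (2*n choose (2*Suc j+1))"
      using Suc.IH[of "Suc j"] by auto
    show ?thesis using e1 e2 i1 i2 Suc by auto
  qed
qed

lemma par_odd: "even (2*n+1 choose (2*i)) = even (n choose i) \<and> even (2*n+1 choose (2*i+1)) = even (n choose i)"
proof (cases i)
  case 0 then show ?thesis using par_even[of n 0] by simp
next
  case (Suc j)
  have e1: "2*n+1 choose (2*i) = (2*n choose (2*j+1)) + (2*n choose (2*Suc j))"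
    using Suc by (simp add: numeral_2_eq_2)
  have e2: "2*n+1 choose (2*i+1) = (2*n choose (2*i)) + (2*n choose (2*i+1))"
    by simp
  show ?thesis using e1 e2 par_even[of n j] par_even[of n i] Suc by auto
qed

lemma mod2_eq: "even a = even b \<Longrightarrow> a mod 2 = (b::nat) mod 2"
  by (metis odd_iff_mod_2_eq_one even_iff_mod_2_eq_zero)

lemma sum_split2: fixes N :: nat shows "(\<Sum>k<2*N. f k) = (\<Sum>i<N. f (2*i) + f (2*i+1))"
  by (induction N) (simp_all add: algebra_simps)

lemma cb_gen: assumes "N \<ge> Suc n" shows "cb b n = (\<Sum>i<N. ((n choose i) mod 2) * b ^ i)"
  unfolding cb_def
  by (rule sum.mono_neutral_left) (use assms in \<open>auto simp: binomial_eq_0\<close>)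

lemma cb_even: "cb b (2*n) = cb (b^2) n"
proof -
  have "cb b (2*n) = (\<Sum>k<2*Suc n. ((2*n choose k) mod 2) * b ^ k)"
    by (rule cb_gen) simp
  also have "\<dots> = (\<Sum>i<Suc n. ((2*n choose (2*i)) mod 2) * b ^ (2*i) + ((2*n choose (2*i+1)) mod 2) * b ^ (2*i+1))"
    by (rule sum_split2)
  also have "\<dots> = (\<Sum>i<Suc n. ((n choose i) mod 2) * (b^2) ^ i)"
  proof (rule sum.cong[OF refl])
    fix i
    have "(2*n choose (2*i)) mod 2 = (n choose i) mod 2" using par_even[of n i] mod2_eq by blast
    moreover have "(2*n choose (2*i+1)) mod 2 = 0" using par_even[of n i] by auto
    ultimately show "((2*n choose (2*i)) mod 2) * b ^ (2*i) + ((2*n choose (2*i+1)) mod 2) * b ^ (2*i+1) = ((n choose i) mod 2) * (b^2) ^ i"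
      by (simp add: power_mult)
  qed
  finally show ?thesis by (simp add: cb_def)
qed

lemma cb_odd: "cb b (2*n+1) = (1+b) * cb (b^2) n"
proof -
  have "cb b (2*n+1) = (\<Sum>k<2*Suc n. ((2*n+1 choose k) mod 2) * b ^ k)"
    by (rule cb_gen) simp
  also have "\<dots> = (\<Sum>i<Suc n. ((2*n+1 choose (2*i)) mod 2) * b ^ (2*i) + ((2*n+1 choose (2*i+1)) mod 2) * b ^ (2*i+1))"
    by (rule sum_split2)
  also have "\<dots> = (\<Sum>i<Suc n. (1+b) * (((n choose i) mod 2) * (b^2) ^ i))"
  proof (rule sum.cong[OF refl])
    fix i
    have "(2*n+1 choose (2*i)) mod 2 = (n choose i) mod 2" using par_odd[of n i] mod2_eq by blast
    moreover have "(2*n+1 choose (2*i+1)) mod 2 = (n choose i) mod 2" using par_odd[of n i] mod2_eq by blast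
    moreover have "b ^ (2*i) = (b^2)^i" by (simp add: power_mult)
    ultimately show "((2*n+1 choose (2*i)) mod 2) * b ^ (2*i) + ((2*n+1 choose (2*i+1)) mod 2) * b ^ (2*i+1) = (1+b) * (((n choose i) mod 2) * (b^2) ^ i)"
      by (simp only: power_Suc2 mult_2 add_Suc_right power_add[symmetric]) (simp add: algebra_simps)
  qed
  also have "\<dots> = (1+b) * cb (b^2) n" by (simp only: cb_def sum_distrib_left)
  finally show ?thesis .
qed

lemma c_cb: "c (2*m) = cb 4 m"
proof -
  have "c (2*m) = cb 2 (2*m)" unfolding c_def cb_def by (simp add: atLeast0AtMost lessThan_Suc_atMost)
  then show ?thesis using cb_even[of 2 m] by simp
qed

lemma cb_shift: "cb b (2^k * x) = cb (b^(2^k)) x"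
proof (induction k arbitrary: b)
  case 0 then show ?case by simp
next
  case (Suc k)
  have "cb b (2^Suc k * x) = cb b (2*(2^k*x))" by (simp add: mult.assoc)
  also have "\<dots> = cb (b^2) (2^k*x)" by (rule cb_even)
  also have "\<dots> = cb ((b^2)^(2^k)) x" by (rule Suc.IH)
  finally show ?case by (simp add: power_mult[symmetric] mult.commute)
qed

lemma cb_shift2: "cb b (2^k * x + 2^k - 1) = (\<Prod>j<k. 1 + b^(2^j)) * cb (b^(2^k)) x"
proof (induction k arbitrary: b)
  case 0 then show ?case by simp
next
  case (Suc k)
  have p: "(2::nat)^k \<ge> 1" by simp
  obtain q where q: "(2::nat)^k = Suc q" using p by (metis Suc_le_D One_nat_def)
  have pp: "(\<Prod>j<Suc k. 1 + b^(2^j)) = (1+b) * (\<Prod>j<k. 1 + (b^2)^(2^j))"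
    by (simp only: prod.lessThan_Suc_shift power_mult[symmetric] power_Suc) simp
  have bb: "(b^2)^(2^k) = b^(2^Suc k)" by (simp only: power_mult[symmetric] power_Suc)
  have "2^Suc k * x + 2^Suc k - 1 = 2*(2^k*x + 2^k - 1) + 1" using q by simp
  then have "cb b (2^Suc k * x + 2^Suc k - 1) = (1+b) * cb (b^2) (2^k*x + 2^k - 1)"
    using cb_odd by simp
  also have "\<dots> = (1+b) * ((\<Prod>j<k. 1 + (b^2)^(2^j)) * cb ((b^2)^(2^k)) x)" using Suc.IH[of "b^2"] by simp
  also have "\<dots> = (\<Prod>j<Suc k. 1 + b^(2^j)) * cb (b^(2^Suc k)) x"
    by (simp only: pp bb mult.assoc)
  finally show ?case .
qed

lemma prod3: "3 * (\<Prod>j<k. 1 + (4::nat)^(2^j)) + 1 = 2^(2^(k+1))"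
proof (induction k)
  case 0 then show ?case by simp
next
  case (Suc k)
  define X :: nat where "X = 2^(2^(k+1))"
  have f4: "(4::nat) = 2^2" by simp
  have f: "(4::nat)^(2^k) = X" unfolding X_def f4 by (simp only: power_mult[symmetric]) simp
  have "2^(2^(Suc k+1)) = X*X" unfolding X_def by (simp add: power_add[symmetric])
  moreover have "3 * (\<Prod>j<Suc k. 1 + (4::nat)^(2^j)) + 1 = (3 * (\<Prod>j<k. 1 + (4::nat)^(2^j))) * (1+X) + 1"
    using f by simp
  moreover define P where "P = (\<Prod>j<k. 1 + (4::nat)^(2^j))"
  moreover have "X = 3*P+1" using Suc.IH X_def P_def by simp
  moreover have "3*P*(1+(3*P+1)) + 1 = (3*P+1)*(3*P+1)" by (simp add: algebra_simps)
  ultimately show ?case by (simp add: P_def mult.assoc)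
qed

lemma cb_ge: "b \<ge> 2 \<Longrightarrow> cb b n \<ge> n + 1"
proof -
  assume b: "b \<ge> 2"
  have "n + 1 \<le> 2^n" by (induction n) auto
  also have "\<dots> \<le> b^n" using b by (simp add: power_mono)
  also have "\<dots> = ((n choose n) mod 2) * b^n" by simp
  also have "\<dots> \<le> cb b n" unfolding cb_def
    by (rule member_le_sum) auto
  finally show ?thesis .
qed


lemma bnd:
  fixes K Qn :: nat assumes K: "K \<ge> 1" and Q: "Qn \<ge> 1"
  shows "\<bar>4 * real ((K * Qn - 1) div 4) - real K * real Qn\<bar> \<le> 5"
proof -
  have KQ: "K * Qn \<ge> 1" using K Q by (simp add: Suc_le_eq)
  define z where "z = K*Qn - 1"
  have "4 * (z div 4) \<le> z" "z < 4*(z div 4) + 4" by auto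
  then have a: "4 * real (z div 4) \<le> real z" "real z < 4 * real (z div 4) + 4" by linarith+
  have "real z = real K * real Qn - 1" unfolding z_def using KQ by (simp add: of_nat_diff)
  then show ?thesis using a z_def by (simp add: abs_le_iff)
qed

lemma approx:
  fixes Q :: "nat \<Rightarrow> nat" and K :: nat
  assumes K: "K \<ge> 1" and Q: "\<And>n. Q n \<ge> n + 1"
  shows "(\<lambda>n. 4 * real ((K * Q n - 1) div 4) / real (Q n)) \<longlonglongrightarrow> real K"
proof (rule tendsto_sandwich)
  have e: "\<And>n. \<bar>4 * real ((K * Q n - 1) div 4) / real (Q n) - real K\<bar> \<le> 5 * inverse (real (Suc n))"
  proof -
    fix n
    have q1: "real (Q n) \<ge> real n + 1" using Q[of n] by linarith
    have qp: "real (Q n) > 0" using q1 by linarith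
    have "\<bar>4 * real ((K * Q n - 1) div 4) / real (Q n) - real K\<bar>
        = \<bar>4 * real ((K * Q n - 1) div 4) - real K * real (Q n)\<bar> / real (Q n)"
      using qp by (simp add: field_simps)
    also have "\<dots> \<le> 5 / real (Q n)"
      using bnd[OF K, of "Q n"] Q[of n] qp by (intro divide_right_mono) auto
    also have "\<dots> \<le> 5 / (real n + 1)" using q1 by (intro divide_left_mono) auto
    finally show "?thesis n" by (simp add: divide_inverse add.commute)
  qed
  show "\<forall>\<^sub>F n in sequentially. real K - 5 * inverse (real (Suc n)) \<le> 4 * real ((K * Q n - 1) div 4) / real (Q n)"
    using e by (intro always_eventually allI) (simp add: abs_le_iff, smt (verit))
  show "\<forall>\<^sub>F n in sequentially. 4 * real ((K * Q n - 1) div 4) / real (Q n) \<le> real K + 5 * inverse (real (Suc n))"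
    using e by (intro always_eventually allI) (simp add: abs_le_iff, smt (verit))
  have z: "(\<lambda>n. 5 * inverse (real (Suc n))) \<longlonglongrightarrow> 0"
    using tendsto_mult_right_zero[OF LIMSEQ_inverse_real_of_nat, of 5] by simp
  show "(\<lambda>n. real K - 5 * inverse (real (Suc n))) \<longlonglongrightarrow> real K"
    using tendsto_diff[OF tendsto_const z] by simp
  show "(\<lambda>n. real K + 5 * inverse (real (Suc n))) \<longlonglongrightarrow> real K"
    using tendsto_add[OF tendsto_const z] by simp
qed

lemma lim_key:
  fixes Q :: "nat \<Rightarrow> nat" and A P :: nat
  assumes P: "P \<ge> 1" and A: "A \<ge> 1" and Q: "\<And>n. Q n \<ge> n + 1"
  shows "(\<lambda>n. real ((A * Q n - 1) div 4) / real ((P * Q n - 1) div 4)) \<longlonglongrightarrow> real A / real P"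
proof -
  have "(\<lambda>n. (4 * real ((A * Q n - 1) div 4) / real (Q n)) / (4 * real ((P * Q n - 1) div 4) / real (Q n)))
        \<longlonglongrightarrow> real A / real P"
    using P by (intro tendsto_divide approx A Q) auto
  moreover have "\<And>n. (4 * real ((A * Q n - 1) div 4) / real (Q n)) / (4 * real ((P * Q n - 1) div 4) / real (Q n))
       = real ((A * Q n - 1) div 4) / real ((P * Q n - 1) div 4)"
  proof -
    fix n have "real (Q n) \<noteq> 0" using Q[of n] by auto
    then show "?thesis n" by (simp add: field_simps)
  qed
  ultimately show ?thesis by simp
qed

theorem mainTheorem9:
  fixes t :: nat
  assumes "t \<ge> 2"
  shows "(\<lambda>n. real (l (2 ^ (t - 1) * n + 2 ^ (t - 2))) /
                real (l (2 ^ (t - 1) * n + 2 ^ (t - 2) - 1)))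
         \<longlonglongrightarrow> 3 * real (F (t - 1)) / (real (F (t - 1)) - 2)"
proof -
  define k where "k = t - 2"
  have t1: "t - 1 = Suc k" "t - 2 = k" using assms k_def by auto
  define B :: nat where "B = 4^(2^k)"
  define Q where "Q n = cb (B^2) n" for n
  define P :: nat where "P = (\<Prod>j<k. 1 + (4::nat)^(2^j))"
  define A :: nat where "A = F (t - 1)"
  have f4: "(4::nat) = 2^2" by simp
  have B2: "B = 2^(2^Suc k)" unfolding B_def f4 by (simp only: power_mult[symmetric] power_Suc)
  have AB: "A = 1 + B" unfolding A_def F_def t1 B2 by simp
  have AP: "3 * P + 1 = B" unfolding P_def B2 using prod3[of k] by simp
  have m1: "\<And>n::nat. 2 ^ (t - 1) * n + 2 ^ (t - 2) = 2^k * (2*n+1)" using t1 by (simp add: algebra_simps)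
  have m2: "\<And>n::nat. 2 ^ (t - 1) * n + 2 ^ (t - 2) - 1 = 2^k * (2*n) + 2^k - 1" using t1 by (simp add: algebra_simps)
  have l1: "\<And>n. l (2 ^ (t - 1) * n + 2 ^ (t - 2)) = (A * Q n - 1) div 4"
    unfolding l_def m1 c_cb cb_shift cb_odd AB Q_def B_def ..
  have l2: "\<And>n. l (2 ^ (t - 1) * n + 2 ^ (t - 2) - 1) = (P * Q n - 1) div 4"
    unfolding l_def m2 c_cb cb_shift2 cb_even P_def Q_def B_def ..
  have Pge: "P \<ge> 1" unfolding P_def by (simp add: Suc_le_eq prod_pos)
  have B4: "(4::nat)^1 \<le> B" unfolding B_def by (rule power_increasing) simp_all
  have "B \<le> B^2" by (simp add: power2_eq_square)
  then have "B^2 \<ge> 2" using B4 by simp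
  then have Qge: "\<And>n. Q n \<ge> n + 1" unfolding Q_def by (rule cb_ge)
  have "(\<lambda>n. real (l (2 ^ (t - 1) * n + 2 ^ (t - 2))) /
                real (l (2 ^ (t - 1) * n + 2 ^ (t - 2) - 1))) \<longlonglongrightarrow> real A / real P"
    unfolding l1 l2 by (rule lim_key[OF Pge]) (use AB Qge in auto)
  moreover have "real A / real P = 3 * real (F (t - 1)) / (real (F (t - 1)) - 2)"
  proof -
    have "real (F (t-1)) = 3 * real P + 2" using AB AP A_def by linarith
    then show ?thesis unfolding A_def using Pge by (simp add: field_simps)
  qed
  ultimately show ?thesis by simp
qed

end
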